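(* For every $\delta>0$, the function $\alpha\mapsto L(\alpha;\delta)$ is strictly decreasing on $(0,1)$.
   Context: For $s\ge0$ let $\phi_1(s)=\int_0^{\pi/2}\frac{\sin^2\theta}{(\sin^2\theta+s^2)^{1/2}}d\theta$ (strictly decreasing, $\phi_1(0)=1$, $\phi_1(s)\to0$ as $s\to\infty$, with inverse $\phi_1^{-1}:(0,1]\to[0,\infty)$) and $\phi_2(s)=\int_0^{\pi/2}\frac{2\sin^2\theta+s^2}{(\sin^2\theta+s^2)^{1/2}}d\theta$. For $\alpha\in(0,1)$ and $\delta>0$ define $L(\alpha;\delta)=\frac4\delta\Big(1-\frac{\phi_2^2(\phi_1^{-1}(\alpha))}{4[1+(\phi_1^{-1}(\alpha))^2]}\Big)$. *)

theory Defs
  imports "HOL-Analysis.Analysis"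
begin

definition phi1 :: "real \<Rightarrow> real" where
  "phi1 s = integral {0..pi/2} (\<lambda>\<theta>. (sin \<theta>)\<^sup>2 / sqrt ((sin \<theta>)\<^sup>2 + s\<^sup>2))"

definition phi2 :: "real \<Rightarrow> real" where
  "phi2 s = integral {0..pi/2} (\<lambda>\<theta>. (2 * (sin \<theta>)\<^sup>2 + s\<^sup>2) / sqrt ((sin \<theta>)\<^sup>2 + s\<^sup>2))"

definition phi1_inv :: "real \<Rightarrow> real" where
  "phi1_inv a = (THE s. 0 \<le> s \<and> phi1 s = a)"

definition L :: "real \<Rightarrow> real \<Rightarrow> real" where
  "L \<alpha> \<delta> = 4 / \<delta> * (1 - (phi2 (phi1_inv \<alpha>))\<^sup>2 / (4 * (1 + (phi1_inv \<alpha>)\<^sup>2)))"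

end

theory Submission
  imports Defs
begin

definition f1 :: "real \<Rightarrow> real \<Rightarrow> real" where
  "f1 s \<theta> = (sin \<theta>)\<^sup>2 / sqrt ((sin \<theta>)\<^sup>2 + s\<^sup>2)"

lemma abs_sq_div: "(a::real)\<^sup>2 / \<bar>a\<bar> = \<bar>a\<bar>"
proof -
  have "a\<^sup>2 = \<bar>a\<bar> * \<bar>a\<bar>" by (simp add: power2_eq_square)
  moreover have "\<bar>a\<bar> * \<bar>a\<bar> / \<bar>a\<bar> = \<bar>a\<bar>" if "a \<noteq> 0"
    using that by (metis abs_eq_0 nonzero_mult_div_cancel_right)
  ultimately show ?thesis by (cases "a = 0") auto
qed

lemma f1_zero: "f1 0 \<theta> = \<bar>sin \<theta>\<bar>"
  unfolding f1_def by (simp add: real_sqrt_abs abs_sq_div)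

lemma cont_f1: "continuous_on A (f1 s)"
proof (cases "s = 0")
  case True
  then show ?thesis unfolding True f1_zero[abs_def] by (intro continuous_intros)
next
  case False
  then have "\<And>\<theta>. sqrt ((sin \<theta>)\<^sup>2 + s\<^sup>2) \<noteq> 0"
    by (simp add: add_nonneg_pos)
  then show ?thesis unfolding f1_def[abs_def] by (intro continuous_intros) auto
qed

lemma phi1_f1: "phi1 s = integral {0..pi/2} (f1 s)"
  unfolding phi1_def f1_def[abs_def] by simp

lemma phi1_0: "phi1 0 = 1"
proof -
  have "integral {0..pi/2} (f1 0) = integral {0..pi/2} sin"
    by (rule integral_cong) (simp add: f1_zero sin_ge_zero)
  moreover have "(sin has_integral ((-cos (pi/2)) - (- cos 0))) {0..pi/2}"
    apply (rule fundamental_theorem_of_calculus)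
     apply simp
    apply (simp flip: has_real_derivative_iff_has_vector_derivative)
    apply (rule derivative_eq_intros | simp)+
    done
  ultimately show ?thesis by (simp add: phi1_f1 integral_unique)
qed

lemma f1_le: assumes "s > 0" shows "f1 s \<theta> \<le> 1 / s"
proof -
  have "sqrt (s\<^sup>2) \<le> sqrt ((sin \<theta>)\<^sup>2 + s\<^sup>2)" by (intro real_sqrt_le_mono) simp
  then have a: "sqrt ((sin \<theta>)\<^sup>2 + s\<^sup>2) \<ge> s" using assms by simp
  have b: "(sin \<theta>)\<^sup>2 \<le> 1" by (simp add: abs_square_le_1)
  have "f1 s \<theta> \<le> 1 / sqrt ((sin \<theta>)\<^sup>2 + s\<^sup>2)"
    unfolding f1_def using b by (simp add: divide_right_mono)
  also have "\<dots> \<le> 1 / s" using a assms by (simp add: frac_le)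
  finally show ?thesis .
qed

lemma phi1_upper: assumes "s > 0" shows "phi1 s \<le> pi / (2 * s)"
proof -
  have "phi1 s \<le> integral {0..pi/2} (\<lambda>_. 1 / s)"
    unfolding phi1_f1
    by (rule integral_le) (auto intro: integrable_continuous_real cont_f1 f1_le[OF assms])
  also have "\<dots> = pi / (2 * s)" using pi_gt_zero by simp
  finally show ?thesis .
qed

lemma sqrt_diff_le:
  fixes x s t :: real assumes "x \<ge> 0"
  shows "\<bar>sqrt (x + t\<^sup>2) - sqrt (x + s\<^sup>2)\<bar> \<le> \<bar>t - s\<bar>"
proof -
  define a where "a = sqrt (x + s\<^sup>2)"
  define b where "b = sqrt (x + t\<^sup>2)"
  have a2: "a\<^sup>2 = x + s\<^sup>2" and b2: "b\<^sup>2 = x + t\<^sup>2" using assms by (simp_all add: a_def b_def)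
  have "sqrt (s\<^sup>2) \<le> a" unfolding a_def using assms by (intro real_sqrt_le_mono) simp
  then have aa: "a \<ge> \<bar>s\<bar>" by simp
  have "sqrt (t\<^sup>2) \<le> b" unfolding b_def using assms by (intro real_sqrt_le_mono) simp
  then have bb: "b \<ge> \<bar>t\<bar>" by simp
  have "(b - a) * (b + a) = (t - s) * (t + s)" using a2 b2 by (simp add: algebra_simps power2_eq_square)
  then have "\<bar>(b - a) * (b + a)\<bar> = \<bar>(t - s) * (t + s)\<bar>" by simp
  moreover have "\<bar>b + a\<bar> = b + a" using aa bb by simp
  ultimately have e: "\<bar>b - a\<bar> * (b + a) = \<bar>t - s\<bar> * \<bar>t + s\<bar>"
    by (simp only: abs_mult)
  have "\<bar>t + s\<bar> \<le> b + a" using aa bb by linarith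
  then have "\<bar>b - a\<bar> * (b + a) \<le> \<bar>t - s\<bar> * (b + a)" using e by (simp add: mult_left_mono)
  moreover have "b + a \<ge> 0" using aa bb by linarith
  ultimately have "\<bar>b - a\<bar> \<le> \<bar>t - s\<bar> \<or> b + a = 0"
    by (cases "b + a = 0") (auto simp: mult_le_cancel_right_pos)
  moreover have "b + a = 0 \<Longrightarrow> \<bar>b - a\<bar> \<le> \<bar>t - s\<bar>" using aa bb by auto
  ultimately show ?thesis unfolding a_def b_def by blast
qed

lemma f1_lip: "\<bar>f1 s \<theta> - f1 t \<theta>\<bar> \<le> \<bar>s - t\<bar>"
proof (cases "sin \<theta> = 0")
  case True then show ?thesis by (simp add: f1_def)
next
  case False
  define x where "x = (sin \<theta>)\<^sup>2"
  have x0: "x > 0" using False by (simp add: x_def)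
  have x1: "x \<le> 1" by (simp add: x_def abs_square_le_1)
  define a where "a = sqrt (x + s\<^sup>2)"
  define b where "b = sqrt (x + t\<^sup>2)"
  have ax: "a \<ge> sqrt x" unfolding a_def by simp
  have bx: "b \<ge> sqrt x" unfolding b_def by simp
  have sx: "sqrt x > 0" using x0 by simp
  have "sqrt x * sqrt x \<le> a * b" by (rule mult_mono[OF ax bx]) (use sx ax in linarith)+
  then have ab: "a * b \<ge> x" using x0 by simp
  have apos: "a > 0" and bpos: "b > 0" using ax bx sx by linarith+
  have "f1 s \<theta> - f1 t \<theta> = x * (b - a) / (a * b)"
    unfolding f1_def x_def[symmetric] a_def[symmetric] b_def[symmetric]
    using apos bpos by (simp add: field_simps)
  then have "\<bar>f1 s \<theta> - f1 t \<theta>\<bar> = (x / (a * b)) * \<bar>b - a\<bar>"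
    using apos bpos x0 by (simp add: abs_mult abs_divide)
  also have "\<dots> \<le> 1 * \<bar>b - a\<bar>"
    by (rule mult_right_mono) (use ab apos bpos in auto)
  also have "\<dots> \<le> \<bar>s - t\<bar>" unfolding a_def b_def using sqrt_diff_le[of x s t] x0
    by (simp add: abs_minus_commute)
  finally show ?thesis .
qed

lemma phi1_lip: "\<bar>phi1 s - phi1 t\<bar> \<le> pi / 2 * \<bar>s - t\<bar>"
proof -
  have "phi1 s - phi1 t = integral {0..pi/2} (\<lambda>\<theta>. f1 s \<theta> - f1 t \<theta>)"
    unfolding phi1_f1
    by (rule integral_diff[symmetric]) (auto intro: integrable_continuous_real cont_f1)
  also have "norm \<dots> \<le> integral {0..pi/2} (\<lambda>_. \<bar>s - t\<bar>)"
    by (rule integral_norm_bound_integral)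
      (auto intro!: integrable_continuous_real continuous_intros cont_f1 f1_lip)
  also have "\<dots> = pi / 2 * \<bar>s - t\<bar>" using pi_gt_zero by simp
  finally show ?thesis by simp
qed

lemma phi1_cont: "isCont phi1 x"
proof -
  have "(pi/2)-lipschitz_on UNIV phi1"
    unfolding lipschitz_on_def dist_real_def using phi1_lip by auto
  then have "continuous_on UNIV phi1" by (rule lipschitz_on_continuous_on)
  then show ?thesis by (simp add: continuous_on_eq_continuous_at)
qed

lemma phi1_strict: assumes "0 \<le> s" "s < t" shows "phi1 t < phi1 s"
  unfolding phi1_f1
proof (rule integral_less_real)
  show "continuous_on {0..pi / 2} (f1 t)" "continuous_on {0..pi / 2} (f1 s)" by (rule cont_f1)+
  show "{0<..<pi / 2} \<noteq> {}" using pi_gt_zero by (simp; linarith)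
  fix \<theta> assume "\<theta> \<in> {0<..<pi/2}"
  then have "sin \<theta> > 0" by (intro sin_gt_zero) auto
  then have x: "(sin \<theta>)\<^sup>2 > 0" by simp
  have "s\<^sup>2 < t\<^sup>2" using assms by (simp add: power_strict_mono)
  then have "sqrt ((sin \<theta>)\<^sup>2 + s\<^sup>2) < sqrt ((sin \<theta>)\<^sup>2 + t\<^sup>2)" by simp
  moreover have "sqrt ((sin \<theta>)\<^sup>2 + s\<^sup>2) > 0" using x by (simp add: add_pos_nonneg)
  ultimately show "f1 t \<theta> < f1 s \<theta>" unfolding f1_def using x
    by (simp add: divide_strict_left_mono)
qed

lemma phi1_inv: assumes "0 < a" "a < 1" shows "phi1_inv a \<ge> 0 \<and> phi1 (phi1_inv a) = a"
proof -
  define b where "b = pi / a"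
  have bpos: "b > 0" using assms by (simp add: b_def)
  have "phi1 b \<le> pi / (2 * b)" by (rule phi1_upper[OF bpos])
  also have "\<dots> = a / 2" using assms by (simp add: b_def)
  finally have "phi1 b \<le> a" using assms by simp
  moreover have "a \<le> phi1 0" using assms by (simp add: phi1_0)
  ultimately have "\<exists>x\<ge>0. x \<le> b \<and> phi1 x = a"
    using bpos phi1_cont by (intro IVT2) auto
  then obtain x where x: "x \<ge> 0" "x \<le> b" "phi1 x = a" by blast
  have uniq: "y = x" if "0 \<le> y" "phi1 y = a" for y
  proof (rule ccontr)
    assume "y \<noteq> x"
    then consider "y < x" | "x < y" by linarith
    then show False
    proof cases
      case 1 then show False using phi1_strict[of y x] that x by simp
    next
      case 2 then show False using phi1_strict[of x y] that x by simp
    qed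
  qed
  have "0 \<le> (THE s. 0 \<le> s \<and> phi1 s = a) \<and> phi1 (THE s. 0 \<le> s \<and> phi1 s = a) = a"
    by (rule theI[of _ x]) (use x uniq in blast)+
  then show ?thesis unfolding phi1_inv_def .
qed

lemma phi1_inv_anti: assumes "0 < a" "a < b" "b < 1" shows "phi1_inv b < phi1_inv a"
proof (rule ccontr)
  assume "\<not> ?thesis"
  then have "phi1_inv a \<le> phi1_inv b" by simp
  then consider "phi1_inv a = phi1_inv b" | "phi1_inv a < phi1_inv b" by linarith
  then show False
  proof cases
    case 1 then show False using phi1_inv[of a] phi1_inv[of b] assms by auto
  next
    case 2 then show False using phi1_strict[of "phi1_inv a" "phi1_inv b"] phi1_inv[of a] phi1_inv[of b] assms
      by auto
  qed
qed

definition rr :: "real \<Rightarrow> real" where "rr s = sqrt (1 + s\<^sup>2)"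
definition vv :: "real \<Rightarrow> real \<Rightarrow> real" where "vv s \<theta> = sqrt ((sin \<theta>)\<^sup>2 + s\<^sup>2)"
definition PP :: "real \<Rightarrow> real \<Rightarrow> real" where
  "PP s \<theta> = sin \<theta> * cos \<theta> / (rr s + vv s \<theta>)"
definition DD :: "real \<Rightarrow> real \<Rightarrow> real" where
  "DD s \<theta> = ((cos \<theta> * cos \<theta> - sin \<theta> * sin \<theta>) * (rr s + vv s \<theta>)
      - sin \<theta> * cos \<theta> * (sin \<theta> * cos \<theta> / vv s \<theta>)) / ((rr s + vv s \<theta>) * (rr s + vv s \<theta>))"
definition gg :: "real \<Rightarrow> real \<Rightarrow> real" where
  "gg s \<theta> = (sin \<theta>)\<^sup>2 / (rr s * (rr s + vv s \<theta>))"
definition KK :: "real \<Rightarrow> real" where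
  "KK s = integral {0..pi/2} (gg s)"

lemma rr_ge1: "rr s \<ge> 1" unfolding rr_def by simp
lemma vv_ge0: "vv s \<theta> \<ge> 0" unfolding vv_def by simp
lemma rr2: "(rr s)\<^sup>2 = 1 + s\<^sup>2" unfolding rr_def by simp
lemma vv2: "(vv s \<theta>)\<^sup>2 = (sin \<theta>)\<^sup>2 + s\<^sup>2" unfolding vv_def by simp

lemma cont_vv: "continuous_on A (vv s)"
  unfolding vv_def[abs_def] by (intro continuous_intros)

lemma cont_PP: "continuous_on A (PP s)"
proof -
  have "\<And>\<theta>. rr s + vv s \<theta> \<noteq> 0" using rr_ge1 vv_ge0 by (smt (verit))
  then show ?thesis unfolding PP_def[abs_def] by (intro continuous_intros cont_vv) auto
qed

lemma cont_gg: "continuous_on A (gg s)"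
proof -
  have "\<And>\<theta>. rr s * (rr s + vv s \<theta>) \<noteq> 0" using rr_ge1 vv_ge0
    by (smt (verit) mult_pos_pos)
  then show ?thesis unfolding gg_def[abs_def] by (intro continuous_intros cont_vv) auto
qed

lemma deriv_PP:
  assumes "sin \<theta> > 0"
  shows "(PP s has_real_derivative DD s \<theta>) (at \<theta>)"
proof -
  have pos: "(sin \<theta>)\<^sup>2 + s\<^sup>2 > 0" using assms by (simp add: add_pos_nonneg)
  have vpos: "vv s \<theta> > 0" using pos by (simp add: vv_def)
  have d1: "((\<lambda>\<theta>. (sin \<theta>)\<^sup>2 + s\<^sup>2) has_real_derivative 2 * sin \<theta> * cos \<theta>) (at \<theta>)"
    by (auto intro!: derivative_eq_intros)
  have d2: "((\<lambda>\<theta>. vv s \<theta>) has_real_derivative (inverse (sqrt ((sin \<theta>)\<^sup>2 + s\<^sup>2)) / 2) * (2 * sin \<theta> * cos \<theta>)) (at \<theta>)"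
    unfolding vv_def by (rule DERIV_chain2[OF DERIV_real_sqrt[OF pos] d1])
  have d3: "((\<lambda>\<theta>. rr s + vv s \<theta>) has_real_derivative 0 + (inverse (sqrt ((sin \<theta>)\<^sup>2 + s\<^sup>2)) / 2) * (2 * sin \<theta> * cos \<theta>)) (at \<theta>)"
    by (rule DERIV_add[OF DERIV_const d2])
  have ne: "rr s + vv s \<theta> \<noteq> 0" using rr_ge1[of s] vpos by linarith
  note d4 = DERIV_divide[OF DERIV_mult[OF DERIV_sin DERIV_cos] d3 ne]
  have eq: "(cos \<theta> * cos \<theta> + - sin \<theta> * sin \<theta>) * (rr s + vv s \<theta>) - sin \<theta> * cos \<theta> * (0 + inverse (sqrt ((sin \<theta>)\<^sup>2 + s\<^sup>2)) / 2 * (2 * sin \<theta> * cos \<theta>))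
     = (cos \<theta> * cos \<theta> - sin \<theta> * sin \<theta>) * (rr s + vv s \<theta>) - sin \<theta> * cos \<theta> * (sin \<theta> * cos \<theta> / vv s \<theta>)"
    unfolding vv_def by (simp add: field_simps)
  have "((\<lambda>x. sin x * cos x / (rr s + vv s x)) has_real_derivative DD s \<theta>) (at \<theta>)"
    using d4 unfolding DD_def eq[symmetric] .
  then show ?thesis unfolding PP_def[abs_def] .
qed

lemma ident_alg0:
  fixes S C r v s p :: real
  assumes "r\<^sup>2 = 1 + s\<^sup>2" "v\<^sup>2 = S\<^sup>2 + s\<^sup>2" "S\<^sup>2 + C\<^sup>2 = 1" "p = r + v" "v \<noteq> 0" "r \<noteq> 0" "p \<noteq> 0"
  shows "(2*S\<^sup>2+s\<^sup>2)/v = r*(1 + S\<^sup>2/(r*p)) - ((C*C - S*S)*p - S*C*(S*C/v))/(p*p)"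
proof -
  have "(2*S\<^sup>2+s\<^sup>2) * (p * p) = r * v * (p*p) + v * p*S\<^sup>2 - v * (C*C-S*S)*p + S*C*(S*C)"
    using assms(1-4) by algebra
  then show ?thesis using assms(5-7)
    apply (simp add: field_simps)
    by algebra
qed

lemma ident: "(2 * (sin \<theta>)\<^sup>2 + s\<^sup>2) / sqrt ((sin \<theta>)\<^sup>2 + s\<^sup>2) = rr s * (1 + gg s \<theta>) - DD s \<theta>"
proof (cases "vv s \<theta> = 0")
  case True
  then have "(sin \<theta>)\<^sup>2 + s\<^sup>2 = 0" by (simp add: vv_def)
  then have z: "sin \<theta> = 0" "s = 0" by (simp_all add: add_nonneg_eq_0_iff)
  then have c: "cos \<theta> * cos \<theta> = 1" using sin_cos_squared_add[of \<theta>] by (simp add: power2_eq_square)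
  have r: "rr s = 1" using z by (simp add: rr_def)
  show ?thesis using True z c r by (simp add: gg_def DD_def)
next
  case False
  have r0: "rr s \<noteq> 0" using rr_ge1[of s] by linarith
  have p0: "rr s + vv s \<theta> \<noteq> 0" using rr_ge1[of s] vv_ge0[of s \<theta>] by linarith
  show ?thesis
    unfolding gg_def DD_def vv_def[symmetric]
    by (rule ident_alg0[OF rr2 vv2 sin_cos_squared_add refl False r0 p0])
qed

lemma phi2_rep: "phi2 s = rr s * (pi / 2 + KK s)"
proof -
  have hP: "(DD s has_integral (PP s (pi/2) - PP s 0)) {0..pi/2}"
  proof (rule fundamental_theorem_of_calculus_interior)
    show "0 \<le> pi / 2" using pi_gt_zero by linarith
    show "continuous_on {0..pi / 2} (PP s)" by (rule cont_PP)
    fix \<theta> assume "\<theta> \<in> {0<..<pi / 2}"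
    then have "sin \<theta> > 0" by (intro sin_gt_zero) auto
    then show "(PP s has_vector_derivative DD s \<theta>) (at \<theta>)"
      using deriv_PP has_real_derivative_iff_has_vector_derivative by blast
  qed
  have P0: "PP s (pi/2) - PP s 0 = 0" by (simp add: PP_def)
  have hK: "(gg s has_integral KK s) {0..pi/2}"
    unfolding KK_def by (rule integrable_integral) (rule integrable_continuous_real[OF cont_gg])
  have h1: "((\<lambda>_. 1::real) has_integral pi/2) {0..pi/2}"
    using has_integral_const_real[of "1::real" 0 "pi/2"] pi_gt_zero by simp
  have h2: "((\<lambda>\<theta>. rr s * (1 + gg s \<theta>) - DD s \<theta>) has_integral rr s * (pi/2 + KK s) - 0) {0..pi/2}"
    using has_integral_diff[OF has_integral_mult_right[OF has_integral_add[OF h1 hK]] hP[unfolded P0]] .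
  have "phi2 s = integral {0..pi/2} (\<lambda>\<theta>. rr s * (1 + gg s \<theta>) - DD s \<theta>)"
    unfolding phi2_def ident ..
  also have "\<dots> = rr s * (pi/2 + KK s)" using h2 by (simp add: integral_unique)
  finally show ?thesis .
qed

lemma KK_nonneg: "KK s \<ge> 0"
  unfolding KK_def
  by (rule integral_nonneg[OF integrable_continuous_real[OF cont_gg]])
     (use rr_ge1[of s] vv_ge0 in \<open>auto simp: gg_def intro!: divide_nonneg_pos mult_pos_pos add_pos_nonneg\<close>)

lemma KK_strict: assumes "0 \<le> s" "s < t" shows "KK t < KK s"
  unfolding KK_def
proof (rule integral_less_real)
  show "continuous_on {0..pi / 2} (gg t)" "continuous_on {0..pi / 2} (gg s)" by (rule cont_gg)+
  show "{0<..<pi / 2} \<noteq> {}" using pi_gt_zero by (simp; linarith)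
  fix \<theta> assume "\<theta> \<in> {0<..<pi/2}"
  then have "sin \<theta> > 0" by (intro sin_gt_zero) auto
  then have x: "(sin \<theta>)\<^sup>2 > 0" by simp
  have st: "s\<^sup>2 < t\<^sup>2" using assms by (simp add: power_strict_mono)
  then have r: "rr s < rr t" by (simp add: rr_def)
  have v: "vv s \<theta> < vv t \<theta>" using st by (simp add: vv_def)
  have r1: "rr s \<ge> 1" by (rule rr_ge1)
  have v0: "vv s \<theta> \<ge> 0" by (rule vv_ge0)
  have "rr s * (rr s + vv s \<theta>) < rr t * (rr t + vv t \<theta>)"
    using r v r1 v0 by (intro mult_strict_mono) auto
  moreover have "rr s * (rr s + vv s \<theta>) > 0" using r1 v0 by (intro mult_pos_pos) auto
  ultimately show "gg t \<theta> < gg s \<theta>" unfolding gg_def using x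
    by (simp add: divide_strict_left_mono)
qed

lemma L_eq: "L a \<delta> = 4 / \<delta> * (1 - (pi / 2 + KK (phi1_inv a))\<^sup>2 / 4)"
proof -
  define s where "s = phi1_inv a"
  have "(phi2 s)\<^sup>2 / (4 * (1 + s\<^sup>2)) = (rr s)\<^sup>2 * (pi / 2 + KK s)\<^sup>2 / (4 * (rr s)\<^sup>2)"
    by (simp add: phi2_rep rr2 power_mult_distrib)
  also have "\<dots> = (pi / 2 + KK s)\<^sup>2 / 4" using rr_ge1[of s] by simp
  finally have eq: "(phi2 s)\<^sup>2 / (4 * (1 + s\<^sup>2)) = (pi / 2 + KK s)\<^sup>2 / 4" .
  have "L a \<delta> = 4 / \<delta> * (1 - (phi2 s)\<^sup>2 / (4 * (1 + s\<^sup>2)))" unfolding L_def s_def ..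
  also have "\<dots> = 4 / \<delta> * (1 - (pi / 2 + KK s)\<^sup>2 / 4)" unfolding eq ..
  finally show ?thesis unfolding s_def .
qed

theorem mainTheorem14:
  fixes \<delta> :: real
  assumes "\<delta> > 0"
  shows "strict_antimono_on {0<..<1} (\<lambda>\<alpha>. L \<alpha> \<delta>)"
  unfolding monotone_on_def
proof (intro ballI impI)
  fix a b :: real assume a: "a \<in> {0<..<1}" and b: "b \<in> {0<..<1}" and ab: "a < b"
  have sb: "phi1_inv b < phi1_inv a" using phi1_inv_anti[of a b] a b ab by auto
  have sb0: "phi1_inv b \<ge> 0" using phi1_inv[of b] b by auto
  have k: "KK (phi1_inv a) < KK (phi1_inv b)" by (rule KK_strict[OF sb0 sb])
  have k0: "KK (phi1_inv a) \<ge> 0" by (rule KK_nonneg)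
  have "(pi / 2 + KK (phi1_inv a))\<^sup>2 < (pi / 2 + KK (phi1_inv b))\<^sup>2"
    using k k0 pi_gt_zero by (intro power_strict_mono) auto
  then have "1 - (pi / 2 + KK (phi1_inv b))\<^sup>2 / 4 < 1 - (pi / 2 + KK (phi1_inv a))\<^sup>2 / 4"
    by simp
  then have "4 / \<delta> * (1 - (pi / 2 + KK (phi1_inv b))\<^sup>2 / 4) < 4 / \<delta> * (1 - (pi / 2 + KK (phi1_inv a))\<^sup>2 / 4)"
    by (rule mult_strict_left_mono) (use assms in simp)
  then show "L b \<delta> < L a \<delta>" unfolding L_eq .
qed

end
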